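(* Let $\mathcal{D}=\{(x_i,a_i,y_i)\}_{i=1}^N$ be a dataset with $a_i\in\{1,2\}$, $y_i\in\{0,1\}$, and let $\mathcal{R}$ be a group-aware Bayes-optimal score (GABOS) function with respect to $\mathcal{D}$. Let the loss $\mathcal{L}$ be the misclassification error on $\mathcal{D}$ of the (normalized) thresholding of $\mathcal{R}$, and let the bias $\mathcal{B}$ be the demographic-parity bias or the equal-opportunity bias on $\mathcal{D}$. Then the post-processing method applied to $\mathcal{R}$ is slack-consistent: for every individual $(x,a)$, the prediction $f_\beta(x,a)$ of the returned classifier is monotonic in the slack $\beta>0$.
   Context: GABOS function: $\mathcal{R}$ is group-aware Bayes-optimal with respect to $\mathcal{D}$ if for every $(x,a)$ appearing in $\mathcal{D}$, $\mathcal{R}(x,a)$ equals the empirical probability that $(x,a)$ is labeled positively in $\mathcal{D}$, i.e. $\mathcal{R}(x,a)=|\{i: x_i=x,a_i=a,y_i=1\}|/|\{i:x_i=x,a_i=a\}|$. A (stochastic) classifier $f$ gives probability $f(x,a)\in[0,1]$ of a positive prediction. Demographic-parity bias: $\mathcal{B}(f)=\frac{\sum_i f(x_i,a_i)\mathbb{1}[a_i=1]}{\sum_i\mathbb{1}[a_i=1]}-\frac{\sum_i f(x_i,a_i)\mathbb{1}[a_i=2]}{\sum_i\mathbb{1}[a_i=2]}$. Equal-opportunity bias: the same with the additional restriction $y_i=1$ in every indicator. Normalized thresholds: for group $a$, a normalized threshold $\tau\in[0,1]$ denotes a threshold classifier on $\mathcal{R}(x,a)$ in group $a$, randomized over at most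 two adjacent deterministic thresholds, whose positive prediction rate in group $a$ (on $\mathcal{D}$) equals $1-\tau$. A pair $(\tau_1,\tau_2)$ defines a classifier (group $a$ uses $\tau_a$) with loss $\mathcal{L}(\tau_1,\tau_2)$ and bias $\mathcal{B}(\tau_1,\tau_2)$. Post-processing method with slack $\beta>0$: among all $(\tau_1,\tau_2)\in[0,1]^2$ minimizing $\mathcal{L}(\tau_1,\tau_2)$ subject to $|\mathcal{B}(\tau_1,\tau_2)|\le\beta$, keep those with smallest $|\mathcal{B}|$; among those the ones with smallest $\tau_1$; among those return the one with smallest $\tau_2$. The resulting classifier is $f_\beta$. Slack-consistency: for every individual $(x,a)$ and all $\beta_1<\beta_2<\beta_3$, either $f_{\beta_1}(x,a)\le f_{\beta_2}(x,a)\le f_{\beta_3}(x,a)$ or $f_{\beta_1}(x,a)\ge f_{\beta_2}(x,a)\ge f_{\beta_3}(x,a)$. *)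

theory Defs
  imports Complex_Main
begin

type_synonym 'x dataset = "('x \<times> nat \<times> nat) list"

definition dx :: "'x dataset \<Rightarrow> nat \<Rightarrow> 'x" where "dx D i = fst (D ! i)"
definition da :: "'x dataset \<Rightarrow> nat \<Rightarrow> nat" where "da D i = fst (snd (D ! i))"
definition dy :: "'x dataset \<Rightarrow> nat \<Rightarrow> nat" where "dy D i = snd (snd (D ! i))"

definition gabos :: "'x dataset \<Rightarrow> ('x \<Rightarrow> nat \<Rightarrow> real) \<Rightarrow> bool" where
  "gabos D R \<longleftrightarrow> (\<forall>i < length D.
     R (dx D i) (da D i) =
       real (card {j. j < length D \<and> dx D j = dx D i \<and> da D j = da D i \<and> dy D j = 1})
     / real (card {j. j < length D \<and> dx D j = dx D i \<and> da D j = da D i}))"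

text \<open>It thresholds the score R(x,a) within group a and randomizes
  only on the single boundary score level (i.e. it is the mixture of two adjacent deterministic
  thresholds), chosen so that the fraction of group a predicted positive on D is 1 - tau:
  with n_a the group size, m = (1 - tau) n_a the target number of positives,
  above(s) = number of group-a points with score > s, at(s) = number with score = s,
  the prediction probability is min 1 (max 0 ((m - above(s)) / at(s))).\<close>
definition grp_size :: "'x dataset \<Rightarrow> nat \<Rightarrow> nat" where
  "grp_size D a = card {i. i < length D \<and> da D i = a}"

definition nthr :: "'x dataset \<Rightarrow> ('x \<Rightarrow> nat \<Rightarrow> real) \<Rightarrow> nat \<Rightarrow> real \<Rightarrow> real \<Rightarrow> real" where
  "nthr D R a \<tau> s =
     (let m = (1 - \<tau>) * real (grp_size D a);
          above = real (card {i. i < length D \<and> da D i = a \<and> R (dx D i) a > s});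
          atl = real (card {i. i < length D \<and> da D i = a \<and> R (dx D i) a = s})
      in min 1 (max 0 ((m - above) / atl)))"

definition clf :: "'x dataset \<Rightarrow> ('x \<Rightarrow> nat \<Rightarrow> real) \<Rightarrow> real \<times> real \<Rightarrow> 'x \<Rightarrow> nat \<Rightarrow> real" where
  "clf D R \<tau> x a = nthr D R a (if a = 1 then fst \<tau> else snd \<tau>) (R x a)"

definition loss :: "'x dataset \<Rightarrow> ('x \<Rightarrow> nat \<Rightarrow> real) \<Rightarrow> real \<times> real \<Rightarrow> real" where
  "loss D R \<tau> =
     (\<Sum>i<length D. (let f = clf D R \<tau> (dx D i) (da D i) in
        if dy D i = 1 then 1 - f else f)) / real (length D)"

datatype bias_kind = DemParity | EqOpportunity

definition bias :: "bias_kind \<Rightarrow> 'x dataset \<Rightarrow> ('x \<Rightarrow> nat \<Rightarrow> real) \<Rightarrow> real \<times> real \<Rightarrow> real" where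
  "bias k D R \<tau> =
     (let sel = (\<lambda>i. k = DemParity \<or> dy D i = 1);
          f = (\<lambda>i. clf D R \<tau> (dx D i) (da D i));
          rate = (\<lambda>a. (\<Sum>i | i < length D \<and> da D i = a \<and> sel i. f i)
                        / real (card {i. i < length D \<and> da D i = a \<and> sel i}))
      in rate 1 - rate 2)"

definition pp_feasible :: "bias_kind \<Rightarrow> 'x dataset \<Rightarrow> ('x \<Rightarrow> nat \<Rightarrow> real) \<Rightarrow> real \<Rightarrow> real \<times> real \<Rightarrow> bool" where
  "pp_feasible k D R \<beta> \<tau> \<longleftrightarrow> fst \<tau> \<in> {0..1} \<and> snd \<tau> \<in> {0..1} \<and> \<bar>bias k D R \<tau>\<bar> \<le> \<beta>"

definition pp_minloss :: "bias_kind \<Rightarrow> 'x dataset \<Rightarrow> ('x \<Rightarrow> nat \<Rightarrow> real) \<Rightarrow> real \<Rightarrow> real \<times> real \<Rightarrow> bool" where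
  "pp_minloss k D R \<beta> \<tau> \<longleftrightarrow> pp_feasible k D R \<beta> \<tau> \<and>
     (\<forall>\<sigma>. pp_feasible k D R \<beta> \<sigma> \<longrightarrow> loss D R \<tau> \<le> loss D R \<sigma>)"

definition pp_minbias :: "bias_kind \<Rightarrow> 'x dataset \<Rightarrow> ('x \<Rightarrow> nat \<Rightarrow> real) \<Rightarrow> real \<Rightarrow> real \<times> real \<Rightarrow> bool" where
  "pp_minbias k D R \<beta> \<tau> \<longleftrightarrow> pp_minloss k D R \<beta> \<tau> \<and>
     (\<forall>\<sigma>. pp_minloss k D R \<beta> \<sigma> \<longrightarrow> \<bar>bias k D R \<tau>\<bar> \<le> \<bar>bias k D R \<sigma>\<bar>)"

definition pp_min1 :: "bias_kind \<Rightarrow> 'x dataset \<Rightarrow> ('x \<Rightarrow> nat \<Rightarrow> real) \<Rightarrow> real \<Rightarrow> real \<times> real \<Rightarrow> bool" where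
  "pp_min1 k D R \<beta> \<tau> \<longleftrightarrow> pp_minbias k D R \<beta> \<tau> \<and>
     (\<forall>\<sigma>. pp_minbias k D R \<beta> \<sigma> \<longrightarrow> fst \<tau> \<le> fst \<sigma>)"

definition postproc :: "bias_kind \<Rightarrow> 'x dataset \<Rightarrow> ('x \<Rightarrow> nat \<Rightarrow> real) \<Rightarrow> real \<Rightarrow> real \<times> real \<Rightarrow> bool" where
  "postproc k D R \<beta> \<tau> \<longleftrightarrow> pp_min1 k D R \<beta> \<tau> \<and>
     (\<forall>\<sigma>. pp_min1 k D R \<beta> \<sigma> \<longrightarrow> snd \<tau> \<le> snd \<sigma>)"

end

theory Submission
  imports Defs
begin


definition afeas :: "(real \<times> real \<Rightarrow> real) \<Rightarrow> real \<Rightarrow> real \<times> real \<Rightarrow> bool" where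
  "afeas bf \<beta> \<tau> \<longleftrightarrow> fst \<tau> \<in> {0..1} \<and> snd \<tau> \<in> {0..1} \<and> \<bar>bf \<tau>\<bar> \<le> \<beta>"
definition aminloss where
  "aminloss lf bf \<beta> \<tau> \<longleftrightarrow> afeas bf \<beta> \<tau> \<and> (\<forall>\<sigma>. afeas bf \<beta> \<sigma> \<longrightarrow> lf \<tau> \<le> (lf \<sigma>::real))"
definition aminbias where
  "aminbias lf bf \<beta> \<tau> \<longleftrightarrow> aminloss lf bf \<beta> \<tau> \<and> (\<forall>\<sigma>. aminloss lf bf \<beta> \<sigma> \<longrightarrow> \<bar>bf \<tau>\<bar> \<le> \<bar>bf \<sigma>\<bar>)"
definition amin1 where
  "amin1 lf bf \<beta> \<tau> \<longleftrightarrow> aminbias lf bf \<beta> \<tau> \<and> (\<forall>\<sigma>. aminbias lf bf \<beta> \<sigma> \<longrightarrow> fst \<tau> \<le> fst \<sigma>)"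
definition apost where
  "apost lf bf \<beta> \<tau> \<longleftrightarrow> amin1 lf bf \<beta> \<tau> \<and> (\<forall>\<sigma>. amin1 lf bf \<beta> \<sigma> \<longrightarrow> snd \<tau> \<le> snd \<sigma>)"

lemma postproc_eq: "postproc k D R \<beta> \<tau> = apost (loss D R) (bias k D R) \<beta> \<tau>"
proof -
  have 1: "pp_feasible k D R \<beta> = afeas (bias k D R) \<beta>" for \<beta>
    by (auto simp: fun_eq_iff pp_feasible_def afeas_def)
  have 2: "pp_minloss k D R \<beta> = aminloss (loss D R) (bias k D R) \<beta>" for \<beta>
    by (auto simp: fun_eq_iff pp_minloss_def aminloss_def 1)
  have 3: "pp_minbias k D R \<beta> = aminbias (loss D R) (bias k D R) \<beta>" for \<beta>
    by (auto simp: fun_eq_iff pp_minbias_def aminbias_def 2)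
  have 4: "pp_min1 k D R \<beta> = amin1 (loss D R) (bias k D R) \<beta>" for \<beta>
    by (auto simp: fun_eq_iff pp_min1_def amin1_def 3)
  show ?thesis by (auto simp: postproc_def apost_def 4)
qed

lemma exch:
  fixes L B :: "real \<Rightarrow> real"
  assumes seg: "\<And>a b l. a \<in> {0..1} \<Longrightarrow> b \<in> {0..1} \<Longrightarrow> l \<in> {0..1} \<Longrightarrow>
      \<exists>t\<in>{0..1}. B t = l * B a + (1 - l) * B b \<and> L t \<le> l * L a + (1 - l) * L b"
    and tA: "tA \<in> {0..1}" and tD: "tD \<in> {0..1}"
    and ab: "B tA \<le> b" and bd: "b \<le> B tD" and sum: "b + c = B tA + B tD"
  shows "\<exists>tB\<in>{0..1}. \<exists>tC\<in>{0..1}. B tB = b \<and> B tC = c \<and> L tB + L tC \<le> L tA + L tD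
           \<and> (b = B tA \<longrightarrow> tB = tA)"
proof (cases "b = B tA")
  case True
  then show ?thesis using tA tD sum by (intro bexI[of _ tA] bexI[of _ tD]) auto
next
  case False
  define a where "a = B tA"
  define d where "d = B tD"
  have lt: "a < d" using False ab bd a_def d_def by auto
  define l where "l = (d - b) / (d - a)"
  have l01: "l \<in> {0..1}" using lt ab bd a_def d_def by (auto simp: l_def field_simps)
  have l01': "1 - l \<in> {0..1}" using l01 by auto
  obtain tB where tB: "tB \<in> {0..1}" "B tB = l * a + (1 - l) * d" "L tB \<le> l * L tA + (1 - l) * L tD"
    using seg[OF tA tD l01] a_def d_def by auto
  obtain tC where tC: "tC \<in> {0..1}" "B tC = (1 - l) * a + (1 - (1 - l)) * d"
      "L tC \<le> (1 - l) * L tA + (1 - (1 - l)) * L tD"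
    using seg[OF tA tD l01'] a_def d_def by auto
  have ld: "l * (d - a) = d - b" using lt by (simp add: l_def)
  have e1: "l * a + (1 - l) * d = b" using ld by (simp add: algebra_simps)
  have e2: "(1 - l) * a + (1 - (1 - l)) * d = c" using ld sum a_def d_def by (simp add: algebra_simps)
  show ?thesis
    apply (rule bexI[OF _ tB(1)], rule bexI[OF _ tC(1)])
    using tB tC e1 e2 False a_def by (auto simp: algebra_simps)
qed

lemma apostD:
  assumes "apost lf bf b x"
  shows "afeas bf b x" "\<And>s. afeas bf b s \<Longrightarrow> lf x \<le> lf s"
    "\<And>s. aminloss lf bf b s \<Longrightarrow> \<bar>bf x\<bar> \<le> \<bar>bf s\<bar>"
    "\<And>s. aminbias lf bf b s \<Longrightarrow> fst x \<le> fst s"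
    "\<And>s. amin1 lf bf b s \<Longrightarrow> snd x \<le> snd s"
    "aminloss lf bf b x" "aminbias lf bf b x" "amin1 lf bf b x"
  using assms by (auto simp: apost_def amin1_def aminbias_def aminloss_def)

lemma H_ml: "apost lf bf b x \<Longrightarrow> afeas bf b z \<Longrightarrow> lf z \<le> lf x \<Longrightarrow> aminloss lf bf b z"
  unfolding aminloss_def using apostD(2) by fastforce

lemma H_mb: "apost lf bf b x \<Longrightarrow> aminloss lf bf b z \<Longrightarrow> \<bar>bf z\<bar> \<le> \<bar>bf x\<bar> \<Longrightarrow> aminbias lf bf b z"
  unfolding aminbias_def using apostD(3) by fastforce

lemma H_m1: "apost lf bf b x \<Longrightarrow> aminbias lf bf b z \<Longrightarrow> fst z \<le> fst x \<Longrightarrow> amin1 lf bf b z"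
  unfolding amin1_def using apostD(4) by fastforce

locale absprob =
  fixes L1 L2 B1 B2 :: "real \<Rightarrow> real" and lf bf :: "real \<times> real \<Rightarrow> real"
  assumes lfd: "\<And>t. fst t \<in> {0..1} \<Longrightarrow> snd t \<in> {0..1} \<Longrightarrow> lf t = L1 (fst t) + L2 (snd t)"
    and bfd: "\<And>t. fst t \<in> {0..1} \<Longrightarrow> snd t \<in> {0..1} \<Longrightarrow> bf t = B1 (fst t) - B2 (snd t)"
    and seg1: "\<And>a b l. a \<in> {0..1} \<Longrightarrow> b \<in> {0..1} \<Longrightarrow> l \<in> {0..1} \<Longrightarrow>
      \<exists>t\<in>{0..1}. B1 t = l * B1 a + (1 - l) * B1 b \<and> L1 t \<le> l * L1 a + (1 - l) * L1 b"
    and seg2: "\<And>a b l. a \<in> {0..1} \<Longrightarrow> b \<in> {0..1} \<Longrightarrow> l \<in> {0..1} \<Longrightarrow>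
      \<exists>t\<in>{0..1}. B2 t = l * B2 a + (1 - l) * B2 b \<and> L2 t \<le> l * L2 a + (1 - l) * L2 b"
    and mono1: "\<And>a b. 0 \<le> a \<Longrightarrow> a \<le> b \<Longrightarrow> b \<le> 1 \<Longrightarrow> B1 b \<le> B1 a"
    and mono2: "\<And>a b. 0 \<le> a \<Longrightarrow> a \<le> b \<Longrightarrow> b \<le> 1 \<Longrightarrow> B2 b \<le> B2 a"
begin

lemma jseg:
  assumes "fst x \<in> {0..1}" "snd x \<in> {0..1}" "fst y \<in> {0..1}" "snd y \<in> {0..1}" "l \<in> {0..1}"
  shows "\<exists>z. fst z \<in> {0..1} \<and> snd z \<in> {0..1} \<and> bf z = l * bf x + (1 - l) * bf y
           \<and> lf z \<le> l * lf x + (1 - l) * lf y"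
proof -
  obtain t1 where t1: "t1 \<in> {0..1}" "B1 t1 = l * B1 (fst x) + (1 - l) * B1 (fst y)"
     "L1 t1 \<le> l * L1 (fst x) + (1 - l) * L1 (fst y)" using seg1 assms by blast
  obtain t2 where t2: "t2 \<in> {0..1}" "B2 t2 = l * B2 (snd x) + (1 - l) * B2 (snd y)"
     "L2 t2 \<le> l * L2 (snd x) + (1 - l) * L2 (snd y)" using seg2 assms by blast
  show ?thesis
    apply (rule exI[of _ "(t1, t2)"])
    using t1 t2 assms by (simp add: lfd bfd algebra_simps)
qed

lemma monoB1: "a \<in> {0..1} \<Longrightarrow> b \<in> {0..1} \<Longrightarrow> B1 a < B1 b \<Longrightarrow> b < a"
  using mono1[of a b] by force
lemma monoB1': "a \<in> {0..1} \<Longrightarrow> b \<in> {0..1} \<Longrightarrow> b < a \<Longrightarrow> B1 a \<le> B1 b"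
  using mono1[of b a] by force
lemma monoB2': "a \<in> {0..1} \<Longrightarrow> b \<in> {0..1} \<Longrightarrow> b < a \<Longrightarrow> B2 a \<le> B2 b"
  using mono2[of b a] by force

lemma caseA:
  assumes b0: "0 < b" and bb: "b < b'" and px: "apost lf bf b x" and py: "apost lf bf b' y"
    and nb: "\<bar>bf x\<bar> < b"
  shows "y = x"
proof -
  have fx: "afeas bf b x" using apostD(1)[OF px] .
  have fy: "afeas bf b' y" using apostD(1)[OF py] .
  have fx': "afeas bf b' x" using fx bb by (auto simp: afeas_def)
  have ly: "lf y \<le> lf x" using apostD(2)[OF py fx'] .
  have eq: "lf y = lf x"
  proof (rule ccontr)
    assume "lf y \<noteq> lf x"
    hence lt: "lf y < lf x" using ly by simp
    define l where "l = (b - \<bar>bf x\<bar>) / (b' - \<bar>bf x\<bar>)"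
    have lpos: "0 < l" "l < 1" using nb bb by (auto simp: l_def field_simps)
    have ll: "l * (b' - \<bar>bf x\<bar>) = b - \<bar>bf x\<bar>" using nb bb by (simp add: l_def)
    obtain z where z: "fst z \<in> {0..1}" "snd z \<in> {0..1}" "bf z = l * bf y + (1 - l) * bf x"
        "lf z \<le> l * lf y + (1 - l) * lf x"
      using jseg[of y x l] fx fy lpos by (auto simp: afeas_def)
    have "\<bar>bf z\<bar> \<le> l * \<bar>bf y\<bar> + (1 - l) * \<bar>bf x\<bar>"
      using z(3) lpos abs_triangle_ineq[of "l * bf y" "(1 - l) * bf x"] by (simp add: abs_mult)
    also have "\<dots> \<le> l * b' + (1 - l) * \<bar>bf x\<bar>"
      using fy lpos by (auto simp: afeas_def intro!: mult_left_mono)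
    also have "\<dots> = b" using ll by (simp add: algebra_simps)
    finally have "afeas bf b z" using z by (simp add: afeas_def)
    hence "lf x \<le> lf z" using apostD(2)[OF px] by blast
    moreover have "lf z < lf x"
    proof -
      have "l * lf y < l * lf x" using lt lpos by simp
      thus ?thesis using z(4) by (simp add: algebra_simps)
    qed
    ultimately show False by simp
  qed
  have mlx': "aminloss lf bf b' x" using H_ml[OF py fx'] eq by simp
  have mbx': "aminbias lf bf b' x"
    unfolding aminbias_def
  proof (intro conjI allI impI mlx')
    fix s assume s: "aminloss lf bf b' s"
    show "\<bar>bf x\<bar> \<le> \<bar>bf s\<bar>"
    proof (cases "\<bar>bf s\<bar> \<le> b")
      case True
      have "afeas bf b s" using s True by (auto simp: aminloss_def afeas_def)
      moreover have "lf s \<le> lf x" using s fx' unfolding aminloss_def by blast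
      ultimately have "aminloss lf bf b s" using H_ml[OF px] by blast
      thus ?thesis using apostD(3)[OF px] by blast
    qed (use nb in auto)
  qed
  have byx: "\<bar>bf y\<bar> \<le> \<bar>bf x\<bar>" using apostD(3)[OF py mlx'] .
  have fyb: "afeas bf b y" using fy byx nb by (auto simp: afeas_def)
  have mly: "aminloss lf bf b y" using H_ml[OF px fyb ly] .
  have mby: "aminbias lf bf b y" using H_mb[OF px mly byx] .
  have f1: "fst x \<le> fst y" using apostD(4)[OF px mby] .
  have f2: "fst y \<le> fst x" using apostD(4)[OF py mbx'] .
  have m1y: "amin1 lf bf b y" using H_m1[OF px mby] f2 .
  have m1x: "amin1 lf bf b' x" using H_m1[OF py mbx'] f1 .
  have "snd x \<le> snd y" using apostD(5)[OF px m1y] .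
  moreover have "snd y \<le> snd x" using apostD(5)[OF py m1x] .
  ultimately show ?thesis using f1 f2 by (simp add: prod_eq_iff)
qed

lemma zero_contra:
  assumes b0: "0 < b" and px: "apost lf bf b x" and bx: "\<bar>bf x\<bar> = b"
    and fz: "fst z \<in> {0..1}" "snd z \<in> {0..1}" and bz: "\<bar>bf z\<bar> < b" and lz: "lf z \<le> lf x"
  shows False
proof -
  have "afeas bf b z" using fz bz by (simp add: afeas_def)
  hence "aminloss lf bf b z" using H_ml[OF px] lz by blast
  hence "\<bar>bf x\<bar> \<le> \<bar>bf z\<bar>" by (rule apostD(3)[OF px])
  thus False using bx bz by simp
qed

lemma caseBp:
  assumes b0: "0 < b" and bb: "b < b'" and px: "apost lf bf b x" and py: "apost lf bf b' y"
    and bx: "bf x = - b"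
  shows "bf y \<le> - b \<and> fst x \<le> fst y \<and> snd y \<le> snd x"
proof -
  have fx: "afeas bf b x" using apostD(1)[OF px] .
  have fy: "afeas bf b' y" using apostD(1)[OF py] .
  have fx': "afeas bf b' x" using fx bb by (auto simp: afeas_def)
  have ly: "lf y \<le> lf x" using apostD(2)[OF py fx'] .
  have xs: "fst x \<in> {0..1}" "snd x \<in> {0..1}" using fx by (auto simp: afeas_def)
  have ys: "fst y \<in> {0..1}" "snd y \<in> {0..1}" using fy by (auto simp: afeas_def)
  have bxa: "\<bar>bf x\<bar> = b" using bx b0 by simp
  have ori: "bf y \<le> - b"
  proof (rule ccontr)
    assume "\<not> bf y \<le> - b"
    hence gt: "- b < bf y" by simp
    show False
    proof (cases "bf y \<le> 0")
      case True
      show False by (rule zero_contra[OF b0 px bxa ys]) (use True gt ly in auto)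
    next
      case False
      define l where "l = bf y / (b + bf y)"
      have l01: "l \<in> {0..1}" using False b0 by (auto simp: l_def field_simps)
      obtain z where z: "fst z \<in> {0..1}" "snd z \<in> {0..1}" "bf z = l * bf x + (1 - l) * bf y"
          "lf z \<le> l * lf x + (1 - l) * lf y"
        using jseg[OF xs ys l01] by auto
      have "l * bf x + (1 - l) * bf y = 0" using False b0 bx
        by (simp add: l_def field_simps)
      moreover have "l * lf x + (1 - l) * lf y \<le> lf x"
        using l01 ly mult_left_mono[OF ly, of "1 - l"] by (simp add: algebra_simps)
      ultimately show False using zero_contra[OF b0 px bxa z(1,2)] z b0 by auto
    qed
  qed
  define g where "g = - bf y"
  have gb: "b \<le> g" "g \<le> b'" using ori fy by (auto simp: g_def afeas_def)
  have ex: "B1 (fst x) - B2 (snd x) = - b" using bx bfd xs by simp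
  have ey: "B1 (fst y) - B2 (snd y) = - g" using bfd ys by (simp add: g_def)
  have i: "fst x \<le> fst y"
  proof (rule ccontr)
    assume "\<not> fst x \<le> fst y"
    hence lt: "fst y < fst x" by simp
    have r1: "B1 (fst x) \<le> B1 (fst y)" using monoB1'[OF xs(1) ys(1) lt] .
    obtain tB tC where t: "tB \<in> {0..1}" "tC \<in> {0..1}" "B2 tB = B1 (fst y) + b"
        "B2 tC = B1 (fst x) + g" "L2 tB + L2 tC \<le> L2 (snd x) + L2 (snd y)"
      using exch[OF seg2 xs(2) ys(2), of "B1 (fst y) + b" "B1 (fst x) + g"] r1 ex ey gb by auto
    define w where "w = (fst y, tB)"
    define z where "z = (fst x, tC)"
    have ws: "fst w \<in> {0..1}" "snd w \<in> {0..1}" and zs: "fst z \<in> {0..1}" "snd z \<in> {0..1}"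
      using t xs ys by (auto simp: w_def z_def)
    have bw: "bf w = - b" using bfd[OF ws] t by (simp add: w_def)
    have bz: "bf z = - g" using bfd[OF zs] t by (simp add: z_def)
    have fw: "afeas bf b w" using ws bw b0 by (simp add: afeas_def)
    have fz: "afeas bf b' z" using zs bz gb b0 by (simp add: afeas_def)
    have sum: "lf w + lf z \<le> lf x + lf y"
      using t lfd[OF ws] lfd[OF zs] lfd[OF xs] lfd[OF ys] by (simp add: w_def z_def)
    have "lf x \<le> lf w" using apostD(2)[OF px fw] .
    moreover have "lf y \<le> lf z" using apostD(2)[OF py fz] .
    ultimately have "lf w \<le> lf x" using sum by simp
    hence "aminloss lf bf b w" using H_ml[OF px fw] by simp
    hence "aminbias lf bf b w" using H_mb[OF px] bw bx by simp
    hence "fst x \<le> fst w" using apostD(4)[OF px] by simp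
    thus False using lt by (simp add: w_def)
  qed
  have ii: "snd y \<le> snd x"
  proof (rule ccontr)
    assume "\<not> snd y \<le> snd x"
    hence lt: "snd x < snd y" by simp
    have r2: "B2 (snd y) \<le> B2 (snd x)" using monoB2'[OF ys(2) xs(2) lt] .
    obtain tB tC where t: "tB \<in> {0..1}" "tC \<in> {0..1}" "B1 tB = B2 (snd x) - g"
        "B1 tC = B2 (snd y) - b" "L1 tB + L1 tC \<le> L1 (fst y) + L1 (fst x)"
        "B2 (snd x) - g = B1 (fst y) \<longrightarrow> tB = fst y"
      using exch[OF seg1 ys(1) xs(1), of "B2 (snd x) - g" "B2 (snd y) - b"] r2 ex ey gb by auto
    define w where "w = (tB, snd x)"
    define z where "z = (tC, snd y)"
    have ws: "fst w \<in> {0..1}" "snd w \<in> {0..1}" and zs: "fst z \<in> {0..1}" "snd z \<in> {0..1}"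
      using t xs ys by (auto simp: w_def z_def)
    have bw: "bf w = - g" using bfd[OF ws] t by (simp add: w_def)
    have bz: "bf z = - b" using bfd[OF zs] t by (simp add: z_def)
    have fw: "afeas bf b' w" using ws bw gb b0 by (simp add: afeas_def)
    have fz: "afeas bf b z" using zs bz b0 by (simp add: afeas_def)
    have sum: "lf w + lf z \<le> lf x + lf y"
      using t lfd[OF ws] lfd[OF zs] lfd[OF xs] lfd[OF ys] by (simp add: w_def z_def)
    have "lf y \<le> lf w" using apostD(2)[OF py fw] .
    moreover have "lf x \<le> lf z" using apostD(2)[OF px fz] .
    ultimately have "lf w \<le> lf y" using sum by simp
    hence "aminloss lf bf b' w" using H_ml[OF py fw] by simp
    hence mbw: "aminbias lf bf b' w" using H_mb[OF py] bw by (simp add: g_def)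
    hence "fst y \<le> fst w" by (rule apostD(4)[OF py])
    hence fyw: "fst y \<le> tB" by (simp add: w_def)
    show False
    proof (cases "B2 (snd x) - g = B1 (fst y)")
      case True
      hence "tB = fst y" using t by simp
      hence "amin1 lf bf b' w" using H_m1[OF py mbw] by (simp add: w_def)
      hence "snd y \<le> snd w" using apostD(5)[OF py] by simp
      thus False using lt by (simp add: w_def)
    next
      case False
      have "B1 (fst y) \<le> B2 (snd x) - g" using r2 ey by simp
      hence "B1 (fst y) < B1 tB" using False t by simp
      hence "tB < fst y" using monoB1[OF ys(1) t(1)] by simp
      thus False using fyw by simp
    qed
  qed
  show ?thesis using ori i ii by simp
qed

lemma caseBm:
  assumes b0: "0 < b" and bb: "b < b'" and px: "apost lf bf b x" and py: "apost lf bf b' y"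
    and bx: "bf x = b"
  shows "b \<le> bf y \<and> fst y \<le> fst x \<and> snd x \<le> snd y"
proof -
  have fx: "afeas bf b x" using apostD(1)[OF px] .
  have fy: "afeas bf b' y" using apostD(1)[OF py] .
  have fx': "afeas bf b' x" using fx bb by (auto simp: afeas_def)
  have ly: "lf y \<le> lf x" using apostD(2)[OF py fx'] .
  have xs: "fst x \<in> {0..1}" "snd x \<in> {0..1}" using fx by (auto simp: afeas_def)
  have ys: "fst y \<in> {0..1}" "snd y \<in> {0..1}" using fy by (auto simp: afeas_def)
  have bxa: "\<bar>bf x\<bar> = b" using bx b0 by simp
  have ori: "b \<le> bf y"
  proof (rule ccontr)
    assume "\<not> b \<le> bf y"
    hence gt: "bf y < b" by simp
    show False
    proof (cases "0 \<le> bf y")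
      case True
      show False by (rule zero_contra[OF b0 px bxa ys]) (use True gt ly in auto)
    next
      case False
      define l where "l = - bf y / (b - bf y)"
      have l01: "l \<in> {0..1}" using False b0 by (auto simp: l_def field_simps)
      obtain z where z: "fst z \<in> {0..1}" "snd z \<in> {0..1}" "bf z = l * bf x + (1 - l) * bf y"
          "lf z \<le> l * lf x + (1 - l) * lf y"
        using jseg[OF xs ys l01] by auto
      have "l * bf x + (1 - l) * bf y = 0" using False b0 bx
        by (simp add: l_def field_simps)
      moreover have "l * lf x + (1 - l) * lf y \<le> lf x"
        using l01 ly mult_left_mono[OF ly, of "1 - l"] by (simp add: algebra_simps)
      ultimately show False using zero_contra[OF b0 px bxa z(1,2)] z b0 by auto
    qed
  qed
  define g where "g = bf y"
  have gb: "b \<le> g" "g \<le> b'" using ori fy by (auto simp: g_def afeas_def)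
  have ex: "B1 (fst x) - B2 (snd x) = b" using bx bfd xs by simp
  have ey: "B1 (fst y) - B2 (snd y) = g" using bfd ys by (simp add: g_def)
  have iii: "fst y \<le> fst x"
  proof (rule ccontr)
    assume "\<not> fst y \<le> fst x"
    hence lt: "fst x < fst y" by simp
    have r1: "B1 (fst y) \<le> B1 (fst x)" using monoB1'[OF ys(1) xs(1) lt] .
    obtain tB tC where t: "tB \<in> {0..1}" "tC \<in> {0..1}" "B2 tB = B1 (fst x) - g"
        "B2 tC = B1 (fst y) - b" "L2 tB + L2 tC \<le> L2 (snd y) + L2 (snd x)"
      using exch[OF seg2 ys(2) xs(2), of "B1 (fst x) - g" "B1 (fst y) - b"] r1 ex ey gb by auto
    define z where "z = (fst x, tB)"
    define w where "w = (fst y, tC)"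
    have ws: "fst w \<in> {0..1}" "snd w \<in> {0..1}" and zs: "fst z \<in> {0..1}" "snd z \<in> {0..1}"
      using t xs ys by (auto simp: w_def z_def)
    have bw: "bf w = b" using bfd[OF ws] t by (simp add: w_def)
    have bz: "bf z = g" using bfd[OF zs] t by (simp add: z_def)
    have fw: "afeas bf b w" using ws bw b0 by (simp add: afeas_def)
    have fz: "afeas bf b' z" using zs bz gb b0 by (simp add: afeas_def)
    have sum: "lf w + lf z \<le> lf x + lf y"
      using t lfd[OF ws] lfd[OF zs] lfd[OF xs] lfd[OF ys] by (simp add: w_def z_def)
    have "lf x \<le> lf w" using apostD(2)[OF px fw] .
    moreover have "lf y \<le> lf z" using apostD(2)[OF py fz] .
    ultimately have "lf z \<le> lf y" using sum by simp
    hence "aminloss lf bf b' z" using H_ml[OF py fz] by simp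
    hence "aminbias lf bf b' z" using H_mb[OF py] bz by (simp add: g_def)
    hence "fst y \<le> fst z" by (rule apostD(4)[OF py])
    thus False using lt by (simp add: z_def)
  qed
  have iv: "snd x \<le> snd y"
  proof (rule ccontr)
    assume "\<not> snd x \<le> snd y"
    hence lt: "snd y < snd x" by simp
    have r2: "B2 (snd x) \<le> B2 (snd y)" using monoB2'[OF xs(2) ys(2) lt] .
    obtain tB tC where t: "tB \<in> {0..1}" "tC \<in> {0..1}" "B1 tB = B2 (snd y) + b"
        "B1 tC = B2 (snd x) + g" "L1 tB + L1 tC \<le> L1 (fst x) + L1 (fst y)"
        "B2 (snd y) + b = B1 (fst x) \<longrightarrow> tB = fst x"
      using exch[OF seg1 xs(1) ys(1), of "B2 (snd y) + b" "B2 (snd x) + g"] r2 ex ey gb by auto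
    define w where "w = (tB, snd y)"
    define z where "z = (tC, snd x)"
    have ws: "fst w \<in> {0..1}" "snd w \<in> {0..1}" and zs: "fst z \<in> {0..1}" "snd z \<in> {0..1}"
      using t xs ys by (auto simp: w_def z_def)
    have bw: "bf w = b" using bfd[OF ws] t by (simp add: w_def)
    have bz: "bf z = g" using bfd[OF zs] t by (simp add: z_def)
    have fw: "afeas bf b w" using ws bw b0 by (simp add: afeas_def)
    have fz: "afeas bf b' z" using zs bz gb b0 by (simp add: afeas_def)
    have sum: "lf w + lf z \<le> lf x + lf y"
      using t lfd[OF ws] lfd[OF zs] lfd[OF xs] lfd[OF ys] by (simp add: w_def z_def)
    have "lf x \<le> lf w" using apostD(2)[OF px fw] .
    moreover have "lf y \<le> lf z" using apostD(2)[OF py fz] .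
    ultimately have "lf w \<le> lf x" using sum by simp
    hence "aminloss lf bf b w" using H_ml[OF px fw] by simp
    hence mbw: "aminbias lf bf b w" using H_mb[OF px] bw bx by simp
    hence "fst x \<le> fst w" by (rule apostD(4)[OF px])
    hence fxw: "fst x \<le> tB" by (simp add: w_def)
    show False
    proof (cases "B2 (snd y) + b = B1 (fst x)")
      case True
      hence "tB = fst x" using t by simp
      hence "amin1 lf bf b w" using H_m1[OF px mbw] by (simp add: w_def)
      hence "snd x \<le> snd w" using apostD(5)[OF px] by simp
      thus False using lt by (simp add: w_def)
    next
      case False
      have "B1 (fst x) \<le> B2 (snd y) + b" using r2 ex by simp
      hence "B1 (fst x) < B1 tB" using False t by simp
      hence "tB < fst x" using monoB1[OF xs(1) t(1)] by simp
      thus False using fxw by simp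
    qed
  qed
  show ?thesis using ori iii iv by simp
qed

lemma two_point:
  assumes b0: "0 < b" and bb: "b < b'" and px: "apost lf bf b x" and py: "apost lf bf b' y"
  shows "y = x \<or> (bf x = - b \<and> bf y \<le> - b \<and> fst x \<le> fst y \<and> snd y \<le> snd x)
     \<or> (bf x = b \<and> b \<le> bf y \<and> fst y \<le> fst x \<and> snd x \<le> snd y)"
proof -
  have "\<bar>bf x\<bar> \<le> b" using apostD(1)[OF px] by (simp add: afeas_def)
  hence "\<bar>bf x\<bar> < b \<or> bf x = - b \<or> bf x = b" by auto
  thus ?thesis using caseA[OF assms] caseBp[OF assms] caseBm[OF assms] by blast
qed

lemma three_point:
  assumes b0: "0 < b1" and "b1 < b2" "b2 < b3"
    and p1: "apost lf bf b1 x1" and p2: "apost lf bf b2 x2" and p3: "apost lf bf b3 x3"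
  shows "(fst x1 \<le> fst x2 \<and> fst x2 \<le> fst x3 \<and> snd x3 \<le> snd x2 \<and> snd x2 \<le> snd x1)
       \<or> (fst x3 \<le> fst x2 \<and> fst x2 \<le> fst x1 \<and> snd x1 \<le> snd x2 \<and> snd x2 \<le> snd x3)"
proof -
  have A: "x2 = x1 \<or> (bf x1 = - b1 \<and> bf x2 \<le> - b1 \<and> fst x1 \<le> fst x2 \<and> snd x2 \<le> snd x1)
     \<or> (bf x1 = b1 \<and> b1 \<le> bf x2 \<and> fst x2 \<le> fst x1 \<and> snd x1 \<le> snd x2)"
    by (rule two_point[OF b0 assms(2) p1 p2])
  have B: "x3 = x2 \<or> (bf x2 = - b2 \<and> bf x3 \<le> - b2 \<and> fst x2 \<le> fst x3 \<and> snd x3 \<le> snd x2)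
     \<or> (bf x2 = b2 \<and> b2 \<le> bf x3 \<and> fst x3 \<le> fst x2 \<and> snd x2 \<le> snd x3)"
    by (rule two_point) (use assms in auto)
  show ?thesis using A B b0 assms(2) by auto
qed

end



definition grp :: "'x dataset \<Rightarrow> nat \<Rightarrow> nat set" where
  "grp D a = {i. i < length D \<and> da D i = a}"
definition Fv :: "'x dataset \<Rightarrow> ('x \<Rightarrow> nat \<Rightarrow> real) \<Rightarrow> nat \<Rightarrow> real \<Rightarrow> nat \<Rightarrow> real" where
  "Fv D R a t i = nthr D R a t (R (dx D i) a)"
definition Qs where "Qs D R a t = (\<Sum>i\<in>grp D a. Fv D R a t i)"
definition TPs where "TPs D R a t = (\<Sum>i\<in>{i\<in>grp D a. dy D i = 1}. Fv D R a t i)"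
definition Pc where "Pc D a = card {i\<in>grp D a. dy D i = 1}"

lemma fin_grp[simp]: "finite (grp D a)"
  by (rule finite_subset[of _ "{..<length D}"]) (auto simp: grp_def)

lemma nthr_mono: "t \<le> t' \<Longrightarrow> nthr D R a t' s \<le> nthr D R a t s"
proof -
  assume tt: "t \<le> t'"
  let ?n = "real (grp_size D a)"
  let ?A = "real (card {i. i < length D \<and> da D i = a \<and> R (dx D i) a > s})"
  let ?C = "real (card {i. i < length D \<and> da D i = a \<and> R (dx D i) a = s})"
  have "(1 - t') * ?n \<le> (1 - t) * ?n" using tt by (intro mult_right_mono) auto
  hence "((1 - t') * ?n - ?A) / ?C \<le> ((1 - t) * ?n - ?A) / ?C"
    by (intro divide_right_mono) auto
  thus ?thesis unfolding nthr_def Let_def by (auto simp: min_def max_def)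
qed

lemma nthr_01: "0 \<le> nthr D R a t s" "nthr D R a t s \<le> 1"
  unfolding nthr_def Let_def by auto

lemma nthr_cont: "continuous_on S (\<lambda>t. nthr D R a t s)"
  unfolding nthr_def Let_def divide_inverse by (intro continuous_intros)

lemma pairwise:
  assumes i: "i \<in> grp D a" and j: "j \<in> grp D a" and lt: "R (dx D j) a < R (dx D i) a"
  shows "Fv D R a t i = 1 \<or> Fv D R a t j = 0"
proof -
  define A where "A s = card {l. l < length D \<and> da D l = a \<and> R (dx D l) a > s}" for s
  define C where "C s = card {l. l < length D \<and> da D l = a \<and> R (dx D l) a = s}" for s
  define m where "m = (1 - t) * real (grp_size D a)"
  let ?ri = "R (dx D i) a" and ?rj = "R (dx D j) a"
  have Fi: "Fv D R a t i = min 1 (max 0 ((m - A ?ri) / C ?ri))"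
    by (simp add: Fv_def nthr_def Let_def A_def C_def m_def)
  have Fj: "Fv D R a t j = min 1 (max 0 ((m - A ?rj) / C ?rj))"
    by (simp add: Fv_def nthr_def Let_def A_def C_def m_def)
  have fin: "finite {l. l < length D \<and> P l}" for P by simp
  have Cpos: "0 < C ?ri" unfolding C_def
    using i by (subst card_gt_0_iff) (auto simp: grp_def)
  have AC: "A ?ri + C ?ri \<le> A ?rj"
  proof -
    let ?S1 = "{l. l < length D \<and> da D l = a \<and> R (dx D l) a > ?ri}"
    let ?S2 = "{l. l < length D \<and> da D l = a \<and> R (dx D l) a = ?ri}"
    let ?S3 = "{l. l < length D \<and> da D l = a \<and> R (dx D l) a > ?rj}"
    have "card ?S1 + card ?S2 = card (?S1 \<union> ?S2)"
      by (rule card_Un_disjoint[symmetric]) auto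
    also have "\<dots> \<le> card ?S3" by (rule card_mono) (use lt in auto)
    finally show ?thesis by (simp add: A_def C_def)
  qed
  show ?thesis
  proof (cases "A ?ri + C ?ri \<le> m")
    case True
    hence "1 \<le> (m - A ?ri) / C ?ri" using Cpos by (simp add: field_simps)
    thus ?thesis using Fi by simp
  next
    case False
    hence "m - A ?rj \<le> 0" using AC by linarith
    hence "(m - A ?rj) / C ?rj \<le> 0" by (simp add: divide_nonpos_nonneg)
    thus ?thesis using Fj by simp
  qed
qed

lemma greedy:
  assumes z01: "\<forall>i\<in>grp D a. 0 \<le> z i \<and> z i \<le> 1"
    and sumeq: "(\<Sum>i\<in>grp D a. z i) = (\<Sum>i\<in>grp D a. Fv D R a t i)"
  shows "(\<Sum>i\<in>grp D a. R (dx D i) a * z i) \<le> (\<Sum>i\<in>grp D a. R (dx D i) a * Fv D R a t i)"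
proof -
  let ?G = "grp D a"
  let ?r = "\<lambda>i. R (dx D i) a"
  define d where "d i = Fv D R a t i - z i" for i
  have sd: "(\<Sum>i\<in>?G. d i) = 0" using sumeq by (simp add: d_def sum_subtractf)
  have F01: "0 \<le> Fv D R a t i" "Fv D R a t i \<le> 1" for i by (simp_all add: Fv_def nthr_01)
  have key: "0 \<le> (\<Sum>i\<in>?G. ?r i * d i)"
  proof (cases "\<exists>i\<in>?G. d i > 0")
    case True
    define P where "P = {i\<in>?G. d i > 0}"
    have Pne: "P \<noteq> {}" and Pfin: "finite P" using True by (auto simp: P_def)
    define c where "c = Min (?r ` P)"
    have c_le: "\<forall>i\<in>P. c \<le> ?r i" using Pfin by (auto simp: c_def)
    have "c \<in> ?r ` P" unfolding c_def using Pfin Pne by (intro Min_in) auto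
    then obtain j where j: "j \<in> P" "c = ?r j" by blast
    have trm: "0 \<le> (?r i - c) * d i" if iG: "i \<in> ?G" for i
    proof (cases "d i > 0")
      case True
      hence "i \<in> P" using iG by (simp add: P_def)
      thus ?thesis using c_le True by simp
    next
      case False
      show ?thesis
      proof (cases "d i = 0")
        case False': False
        hence neg: "d i < 0" using False by simp
        have "Fv D R a t i \<noteq> 1" using neg z01 iG by (auto simp: d_def)
        moreover have "Fv D R a t j \<noteq> 0" using j(1) z01 by (auto simp: d_def P_def)
        moreover have "j \<in> ?G" using j(1) by (simp add: P_def)
        ultimately have "\<not> ?r j < ?r i" using pairwise[OF iG] by blast
        hence "?r i - c \<le> 0" using j(2) by simp
        thus ?thesis using neg by (simp add: mult_nonpos_nonpos)
      qed simp
    qed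
    have "(\<Sum>i\<in>?G. (?r i - c) * d i) = (\<Sum>i\<in>?G. ?r i * d i) - c * (\<Sum>i\<in>?G. d i)"
      by (simp add: left_diff_distrib sum_subtractf sum_distrib_left)
    hence "(\<Sum>i\<in>?G. ?r i * d i) = (\<Sum>i\<in>?G. (?r i - c) * d i)" using sd by simp
    also have "\<dots> \<ge> 0" by (rule sum_nonneg) (use trm in auto)
    finally show ?thesis by simp
  next
    case False
    have "(\<Sum>i\<in>?G. - d i) = 0" using sd by (simp add: sum_negf)
    hence "\<forall>i\<in>?G. - d i = 0" using False by (subst sum_nonneg_eq_0_iff[symmetric]) auto
    thus ?thesis by simp
  qed
  have "(\<Sum>i\<in>?G. ?r i * Fv D R a t i) - (\<Sum>i\<in>?G. ?r i * z i) = (\<Sum>i\<in>?G. ?r i * d i)"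
    by (simp add: d_def right_diff_distrib sum_subtractf)
  thus ?thesis using key by simp
qed

lemma gabos_sum:
  assumes gab: "gabos D R"
  shows "(\<Sum>i\<in>{i\<in>grp D a. dy D i = 1}. h (dx D i)) = (\<Sum>i\<in>grp D a. R (dx D i) a * h (dx D i))"
proof -
  let ?G = "grp D a"
  have "(\<Sum>i\<in>{i\<in>?G. dy D i = 1}. h (dx D i)) = (\<Sum>i\<in>?G. if dy D i = 1 then h (dx D i) else 0)"
    by (simp add: sum.inter_filter)
  also have "\<dots> = (\<Sum>x\<in>dx D ` ?G. \<Sum>i\<in>{i. i \<in> ?G \<and> dx D i = x}. if dy D i = 1 then h (dx D i) else 0)"
    by (rule sum.image_gen) simp
  also have "\<dots> = (\<Sum>x\<in>dx D ` ?G. \<Sum>i\<in>{i. i \<in> ?G \<and> dx D i = x}. R (dx D i) a * h (dx D i))"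
  proof (rule sum.cong[OF refl])
    fix x assume "x \<in> dx D ` ?G"
    then obtain i0 where i0: "i0 \<in> ?G" "x = dx D i0" by blast
    let ?C = "{i. i \<in> ?G \<and> dx D i = x}"
    let ?C1 = "{i. i \<in> ?G \<and> dx D i = x \<and> dy D i = 1}"
    have finC: "finite ?C" by simp
    have "(\<Sum>i\<in>?C. if dy D i = 1 then h (dx D i) else 0) = (\<Sum>i\<in>?C. if dy D i = 1 then h x else 0)"
      by (rule sum.cong) auto
    also have "\<dots> = (\<Sum>i\<in>{i\<in>?C. dy D i = 1}. h x)"
      by (rule sum.inter_filter[OF finC, symmetric])
    also have "{i\<in>?C. dy D i = 1} = ?C1" by auto
    also have "(\<Sum>i\<in>?C1. h x) = h x * real (card ?C1)" by simp
    finally have lhs: "(\<Sum>i\<in>?C. if dy D i = 1 then h (dx D i) else 0) = h x * real (card ?C1)" .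
    have rhs: "(\<Sum>i\<in>?C. R (dx D i) a * h (dx D i)) = R x a * h x * real (card ?C)"
    proof -
      have "(\<Sum>i\<in>?C. R (dx D i) a * h (dx D i)) = (\<Sum>i\<in>?C. R x a * h x)" by (rule sum.cong) auto
      thus ?thesis by simp
    qed
    have g0: "R (dx D i0) (da D i0) =
       real (card {j. j < length D \<and> dx D j = dx D i0 \<and> da D j = da D i0 \<and> dy D j = 1})
     / real (card {j. j < length D \<and> dx D j = dx D i0 \<and> da D j = da D i0})"
      using gab i0 by (auto simp: gabos_def grp_def)
    have e1: "{j. j < length D \<and> dx D j = dx D i0 \<and> da D j = da D i0 \<and> dy D j = 1} = ?C1"
      using i0 by (auto simp: grp_def)
    have e2: "{j. j < length D \<and> dx D j = dx D i0 \<and> da D j = da D i0} = ?C"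
      using i0 by (auto simp: grp_def)
    have Rx: "R x a = real (card ?C1) / real (card ?C)"
      using g0 e1 e2 i0 by (simp add: grp_def)
    have "card ?C > 0" using i0 finC by (subst card_gt_0_iff) auto
    hence cne: "real (card ?C) \<noteq> 0" by linarith
    have "R x a * real (card ?C) = real (card ?C1)" unfolding Rx using cne by simp
    thus "(\<Sum>i\<in>?C. if dy D i = 1 then h (dx D i) else 0) = (\<Sum>i\<in>?C. R (dx D i) a * h (dx D i))"
      using lhs rhs by (simp add: algebra_simps)
  qed
  also have "\<dots> = (\<Sum>i\<in>?G. R (dx D i) a * h (dx D i))"
    by (rule sum.image_gen[symmetric]) simp
  finally show ?thesis .
qed

lemma TP_eq: "gabos D R \<Longrightarrow> TPs D R a t = (\<Sum>i\<in>grp D a. R (dx D i) a * Fv D R a t i)"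
  unfolding TPs_def Fv_def using gabos_sum[where h="\<lambda>x. nthr D R a t (R x a)"] by simp

lemma lpc:
  assumes gab: "gabos D R" and l: "0 \<le> l" "l \<le> 1"
    and q: "Qs D R a t = l * Qs D R a tA + (1 - l) * Qs D R a tB"
  shows "l * TPs D R a tA + (1 - l) * TPs D R a tB \<le> TPs D R a t"
proof -
  define z where "z i = l * Fv D R a tA i + (1 - l) * Fv D R a tB i" for i
  have F01: "0 \<le> Fv D R a s i" "Fv D R a s i \<le> 1" for s i by (simp_all add: Fv_def nthr_01)
  have z01: "\<forall>i\<in>grp D a. 0 \<le> z i \<and> z i \<le> 1"
  proof
    fix i
    have "l * Fv D R a tA i \<le> l" using F01[of tA i] l by (simp add: mult_left_le)
    moreover have "(1 - l) * Fv D R a tB i \<le> 1 - l" using F01[of tB i] l by (simp add: mult_left_le)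
    ultimately show "0 \<le> z i \<and> z i \<le> 1" using F01 l by (auto simp: z_def)
  qed
  have sz: "(\<Sum>i\<in>grp D a. z i) = (\<Sum>i\<in>grp D a. Fv D R a t i)"
    using q by (simp add: z_def sum.distrib sum_distrib_left[symmetric] Qs_def)
  have "(\<Sum>i\<in>grp D a. R (dx D i) a * z i) \<le> TPs D R a t"
    using greedy[OF z01 sz] TP_eq[OF gab] by simp
  moreover have "(\<Sum>i\<in>grp D a. R (dx D i) a * z i) = l * TPs D R a tA + (1 - l) * TPs D R a tB"
  proof -
    have "(\<Sum>i\<in>grp D a. R (dx D i) a * z i) = (\<Sum>i\<in>grp D a. l * (R (dx D i) a * Fv D R a tA i) + (1 - l) * (R (dx D i) a * Fv D R a tB i))"
      by (rule sum.cong) (auto simp: z_def algebra_simps)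
    also have "\<dots> = l * (\<Sum>i\<in>grp D a. R (dx D i) a * Fv D R a tA i) + (1 - l) * (\<Sum>i\<in>grp D a. R (dx D i) a * Fv D R a tB i)"
      by (simp add: sum.distrib sum_distrib_left)
    finally show ?thesis by (simp add: TP_eq[OF gab])
  qed
  ultimately show ?thesis by simp
qed

lemma seg_generic:
  fixes Q T :: "real \<Rightarrow> real"
  assumes cQ: "continuous_on {0..1} Q" and cT: "continuous_on {0..1} T"
    and mQ: "\<And>a b. 0 \<le> a \<Longrightarrow> a \<le> b \<Longrightarrow> b \<le> 1 \<Longrightarrow> Q b \<le> Q a"
    and mT: "\<And>a b. 0 \<le> a \<Longrightarrow> a \<le> b \<Longrightarrow> b \<le> 1 \<Longrightarrow> T b \<le> T a"
    and lp: "\<And>t. t \<in> {0..1} \<Longrightarrow> Q t = l * Q tA + (1 - l) * Q tB \<Longrightarrow> l * T tA + (1 - l) * T tB \<le> T t"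
    and tA: "tA \<in> {0..1}" and tB: "tB \<in> {0..1}" and l: "l \<in> {0..1}" and N: "0 \<le> N"
  shows "(\<exists>t\<in>{0..1}. Q t = l * Q tA + (1 - l) * Q tB \<and>
            (P + Q t - 2 * T t) / N \<le> l * ((P + Q tA - 2 * T tA) / N) + (1 - l) * ((P + Q tB - 2 * T tB) / N))
       \<and> (\<exists>t\<in>{0..1}. T t = l * T tA + (1 - l) * T tB \<and>
            (P + Q t - 2 * T t) / N \<le> l * ((P + Q tA - 2 * T tA) / N) + (1 - l) * ((P + Q tB - 2 * T tB) / N))"
proof -
  define lo where "lo = min tA tB"
  define hi where "hi = max tA tB"
  define q where "q = l * Q tA + (1 - l) * Q tB"
  define tt where "tt = l * T tA + (1 - l) * T tB"
  have lohi: "0 \<le> lo" "lo \<le> hi" "hi \<le> 1" using tA tB by (auto simp: lo_def hi_def)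
  have cvx: "min u v \<le> l * u + (1 - l) * v" "l * u + (1 - l) * v \<le> max u v" for u v :: real
  proof -
    have "l * min u v \<le> l * u" "(1 - l) * min u v \<le> (1 - l) * v" using l by (auto intro: mult_left_mono)
    thus "min u v \<le> l * u + (1 - l) * v" by (simp add: algebra_simps)
    have "l * u \<le> l * max u v" "(1 - l) * v \<le> (1 - l) * max u v" using l by (auto intro: mult_left_mono)
    thus "l * u + (1 - l) * v \<le> max u v" by (simp add: algebra_simps)
  qed
  have Qhi: "Q hi \<le> q"
  proof -
    have "Q hi \<le> Q tA" "Q hi \<le> Q tB" using tA tB by (auto simp: hi_def intro!: mQ)
    thus ?thesis using cvx(1)[of "Q tA" "Q tB"] by (simp add: q_def)
  qed
  have Qlo: "q \<le> Q lo"
  proof -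
    have "Q tA \<le> Q lo" "Q tB \<le> Q lo" using tA tB by (auto simp: lo_def intro!: mQ)
    thus ?thesis using cvx(2)[of "Q tA" "Q tB"] by (simp add: q_def)
  qed
  have cQ': "continuous_on {lo..hi} Q" by (rule continuous_on_subset[OF cQ]) (use lohi in auto)
  obtain ts where ts: "lo \<le> ts" "ts \<le> hi" "Q ts = q" using IVT2'[OF Qhi Qlo lohi(2) cQ'] by blast
  have ts01: "ts \<in> {0..1}" using ts lohi by auto
  have Tts: "tt \<le> T ts" using lp[OF ts01] ts(3) by (simp add: q_def tt_def)
  have comb: "l * ((P + Q tA - 2 * T tA) / N) + (1 - l) * ((P + Q tB - 2 * T tB) / N)
      = (P + q - 2 * tt) / N"
    by (simp add: q_def tt_def add_divide_distrib[symmetric] algebra_simps)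
  have c1: "\<exists>t\<in>{0..1}. Q t = q \<and> (P + Q t - 2 * T t) / N \<le> (P + q - 2 * tt) / N"
  proof (rule bexI[OF _ ts01], intro conjI ts(3))
    show "(P + Q ts - 2 * T ts) / N \<le> (P + q - 2 * tt) / N"
      using Tts ts(3) N by (intro divide_right_mono) auto
  qed
  have Thi: "T hi \<le> tt"
  proof -
    have "T hi \<le> T tA" "T hi \<le> T tB" using tA tB by (auto simp: hi_def intro!: mT)
    thus ?thesis using cvx(1)[of "T tA" "T tB"] by (simp add: tt_def)
  qed
  have cT': "continuous_on {ts..hi} T" by (rule continuous_on_subset[OF cT]) (use ts lohi in auto)
  obtain t2 where t2: "ts \<le> t2" "t2 \<le> hi" "T t2 = tt" using IVT2'[OF Thi Tts ts(2) cT'] by blast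
  have t201: "t2 \<in> {0..1}" using t2 ts lohi by auto
  have Qt2: "Q t2 \<le> q" using mQ[of ts t2] t2 ts lohi ts(3) by auto
  have c2: "\<exists>t\<in>{0..1}. T t = tt \<and> (P + Q t - 2 * T t) / N \<le> (P + q - 2 * tt) / N"
  proof (rule bexI[OF _ t201], intro conjI t2(3))
    show "(P + Q t2 - 2 * T t2) / N \<le> (P + q - 2 * tt) / N"
      using Qt2 t2(3) N by (intro divide_right_mono) auto
  qed
  show ?thesis using c1 c2 comb by (simp add: q_def tt_def)
qed

definition Lg where "Lg D R a t = (real (Pc D a) + Qs D R a t - 2 * TPs D R a t) / real (length D)"
definition Bg where "Bg k D R a t = (if k = DemParity then Qs D R a t / real (card (grp D a))
   else TPs D R a t / real (Pc D a))"

lemma Qs_cont: "continuous_on S (Qs D R a)"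
  unfolding Qs_def Fv_def by (intro continuous_intros nthr_cont)
lemma TPs_cont: "continuous_on S (TPs D R a)"
  unfolding TPs_def Fv_def by (intro continuous_intros nthr_cont)
lemma Qs_mono: "t \<le> t' \<Longrightarrow> Qs D R a t' \<le> Qs D R a t"
  unfolding Qs_def Fv_def by (intro sum_mono nthr_mono)
lemma TPs_mono: "t \<le> t' \<Longrightarrow> TPs D R a t' \<le> TPs D R a t"
  unfolding TPs_def Fv_def by (intro sum_mono nthr_mono)

lemma Bg_mono: "t \<le> t' \<Longrightarrow> Bg k D R a t' \<le> Bg k D R a t"
  unfolding Bg_def by (auto intro!: divide_right_mono Qs_mono TPs_mono)

lemma seg_group:
  assumes gab: "gabos D R" and tA: "tA \<in> {0..1}" and tB: "tB \<in> {0..1}" and l: "l \<in> {0..1}"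
  shows "\<exists>t\<in>{0..1}. Bg k D R a t = l * Bg k D R a tA + (1 - l) * Bg k D R a tB
     \<and> Lg D R a t \<le> l * Lg D R a tA + (1 - l) * Lg D R a tB"
proof -
  have G: "(\<exists>t\<in>{0..1}. Qs D R a t = l * Qs D R a tA + (1 - l) * Qs D R a tB \<and>
            Lg D R a t \<le> l * Lg D R a tA + (1 - l) * Lg D R a tB)
       \<and> (\<exists>t\<in>{0..1}. TPs D R a t = l * TPs D R a tA + (1 - l) * TPs D R a tB \<and>
            Lg D R a t \<le> l * Lg D R a tA + (1 - l) * Lg D R a tB)"
    unfolding Lg_def
    by (rule seg_generic[OF Qs_cont TPs_cont Qs_mono TPs_mono _ tA tB l])
       (use lpc[OF gab] l in auto)
  show ?thesis
  proof (cases "k = DemParity")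
    case True
    from G obtain t where "t \<in> {0..1}" "Qs D R a t = l * Qs D R a tA + (1 - l) * Qs D R a tB"
      "Lg D R a t \<le> l * Lg D R a tA + (1 - l) * Lg D R a tB" by blast
    then show ?thesis using True by (intro bexI[of _ t]) (auto simp: Bg_def add_divide_distrib)
  next
    case False
    from G obtain t where "t \<in> {0..1}" "TPs D R a t = l * TPs D R a tA + (1 - l) * TPs D R a tB"
      "Lg D R a t \<le> l * Lg D R a tA + (1 - l) * Lg D R a tB" by blast
    then show ?thesis using False by (intro bexI[of _ t]) (auto simp: Bg_def add_divide_distrib)
  qed
qed

lemma clf_grp: "i \<in> grp D a \<Longrightarrow> clf D R tau (dx D i) (da D i) = Fv D R a (if a = 1 then fst tau else snd tau) i"
  by (simp add: clf_def Fv_def grp_def)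

lemma grp_err:
  "(\<Sum>i\<in>grp D a. if dy D i = 1 then 1 - Fv D R a t i else Fv D R a t i)
     = real (Pc D a) + Qs D R a t - 2 * TPs D R a t"
proof -
  have "(\<Sum>i\<in>grp D a. if dy D i = 1 then 1 - Fv D R a t i else Fv D R a t i)
     = (\<Sum>i\<in>grp D a. (if dy D i = 1 then 1 else 0) + Fv D R a t i - 2 * (if dy D i = 1 then Fv D R a t i else 0))"
    by (rule sum.cong) auto
  also have "\<dots> = (\<Sum>i\<in>grp D a. if dy D i = 1 then 1 else 0) + Qs D R a t
       - 2 * (\<Sum>i\<in>grp D a. if dy D i = 1 then Fv D R a t i else 0)"
    by (simp add: Qs_def sum.distrib sum_subtractf sum_distrib_left)
  also have "(\<Sum>i\<in>grp D a. if dy D i = 1 then 1 else 0) = (\<Sum>i\<in>{i\<in>grp D a. dy D i = 1}. (1::real))"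
    by (rule sum.inter_filter[symmetric]) simp
  also have "(\<Sum>i\<in>grp D a. if dy D i = 1 then Fv D R a t i else 0) = TPs D R a t"
    unfolding TPs_def by (rule sum.inter_filter[symmetric]) simp
  finally show ?thesis by (simp add: Pc_def)
qed

lemma loss_dec:
  assumes labels: "\<forall>j < length D. da D j \<in> {1, 2} \<and> dy D j \<in> {0, 1}"
  shows "loss D R tau = Lg D R 1 (fst tau) + Lg D R 2 (snd tau)"
proof -
  let ?e = "\<lambda>i. let f = clf D R tau (dx D i) (da D i) in if dy D i = 1 then 1 - f else f"
  have U: "{..<length D} = grp D 1 \<union> grp D 2" using labels by (auto simp: grp_def)
  have "(\<Sum>i<length D. ?e i) = (\<Sum>i\<in>grp D 1. ?e i) + (\<Sum>i\<in>grp D 2. ?e i)"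
    unfolding U by (rule sum.union_disjoint) (auto simp: grp_def)
  also have "(\<Sum>i\<in>grp D 1. ?e i) = (\<Sum>i\<in>grp D 1. if dy D i = 1 then 1 - Fv D R 1 (fst tau) i else Fv D R 1 (fst tau) i)"
    by (rule sum.cong) (auto simp: clf_grp Let_def)
  also have "(\<Sum>i\<in>grp D 2. ?e i) = (\<Sum>i\<in>grp D 2. if dy D i = 1 then 1 - Fv D R 2 (snd tau) i else Fv D R 2 (snd tau) i)"
    by (rule sum.cong) (auto simp: clf_grp Let_def)
  finally show ?thesis unfolding loss_def Lg_def grp_err by (simp add: add_divide_distrib)
qed

lemma bias_dec: "bias k D R tau = Bg k D R 1 (fst tau) - Bg k D R 2 (snd tau)"
proof -
  have S: "{i. i < length D \<and> da D i = a \<and> (k = DemParity \<or> dy D i = 1)}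
     = (if k = DemParity then grp D a else {i\<in>grp D a. dy D i = 1})" for a
    by (auto simp: grp_def)
  have q: "(\<Sum>i\<in>grp D a. clf D R tau (dx D i) (da D i)) = Qs D R a (if a = 1 then fst tau else snd tau)" for a
    unfolding Qs_def by (rule sum.cong) (auto simp: clf_grp)
  have t: "(\<Sum>i\<in>{i\<in>grp D a. dy D i = 1}. clf D R tau (dx D i) (da D i)) = TPs D R a (if a = 1 then fst tau else snd tau)" for a
    unfolding TPs_def by (rule sum.cong) (auto simp: clf_grp)
  show ?thesis
  proof (cases "k = DemParity")
    case True
    have "bias k D R tau = (\<Sum>i\<in>grp D 1. clf D R tau (dx D i) (da D i)) / real (card (grp D 1))
       - (\<Sum>i\<in>grp D 2. clf D R tau (dx D i) (da D i)) / real (card (grp D 2))"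
      by (simp add: bias_def True grp_def)
    thus ?thesis unfolding q using True by (simp add: Bg_def)
  next
    case False
    have "bias k D R tau = (\<Sum>i\<in>{i\<in>grp D 1. dy D i = 1}. clf D R tau (dx D i) (da D i)) / real (Pc D 1)
       - (\<Sum>i\<in>{i\<in>grp D 2. dy D i = 1}. clf D R tau (dx D i) (da D i)) / real (Pc D 2)"
      by (simp add: bias_def False grp_def Pc_def conj_assoc)
    thus ?thesis unfolding t using False by (simp add: Bg_def)
  qed
qed

theorem theorem3:
  fixes D :: "'x dataset" and R :: "'x \<Rightarrow> nat \<Rightarrow> real" and k :: bias_kind
    and \<beta>1 \<beta>2 \<beta>3 :: real and \<tau>1 \<tau>2 \<tau>3 :: "real \<times> real" and i :: nat
  assumes labels: "\<forall>j < length D. da D j \<in> {1, 2} \<and> dy D j \<in> {0, 1}"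
    and groups: "\<forall>a \<in> {1, 2}. \<exists>j < length D. da D j = a \<and> (k = EqOpportunity \<longrightarrow> dy D j = 1)"
    and "gabos D R"
    and "0 < \<beta>1" and "\<beta>1 < \<beta>2" and "\<beta>2 < \<beta>3"
    and "postproc k D R \<beta>1 \<tau>1" and "postproc k D R \<beta>2 \<tau>2" and "postproc k D R \<beta>3 \<tau>3"
    and "i < length D"
  shows "(clf D R \<tau>1 (dx D i) (da D i) \<le> clf D R \<tau>2 (dx D i) (da D i) \<and>
          clf D R \<tau>2 (dx D i) (da D i) \<le> clf D R \<tau>3 (dx D i) (da D i)) \<or>
         (clf D R \<tau>1 (dx D i) (da D i) \<ge> clf D R \<tau>2 (dx D i) (da D i) \<and>
          clf D R \<tau>2 (dx D i) (da D i) \<ge> clf D R \<tau>3 (dx D i) (da D i))"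
proof -
  interpret absprob "Lg D R 1" "Lg D R 2" "Bg k D R 1" "Bg k D R 2" "loss D R" "bias k D R"
  proof
    show "loss D R t = Lg D R 1 (fst t) + Lg D R 2 (snd t)" for t by (rule loss_dec[OF labels])
    show "bias k D R t = Bg k D R 1 (fst t) - Bg k D R 2 (snd t)" for t by (rule bias_dec)
    show "\<exists>t\<in>{0..1}. Bg k D R 1 t = l * Bg k D R 1 a + (1 - l) * Bg k D R 1 b
      \<and> Lg D R 1 t \<le> l * Lg D R 1 a + (1 - l) * Lg D R 1 b"
      if "a \<in> {0..1}" "b \<in> {0..1}" "l \<in> {0..1}" for a b l by (rule seg_group) (use assms that in auto)
    show "\<exists>t\<in>{0..1}. Bg k D R 2 t = l * Bg k D R 2 a + (1 - l) * Bg k D R 2 b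
      \<and> Lg D R 2 t \<le> l * Lg D R 2 a + (1 - l) * Lg D R 2 b"
      if "a \<in> {0..1}" "b \<in> {0..1}" "l \<in> {0..1}" for a b l by (rule seg_group) (use assms that in auto)
    show "Bg k D R 1 b \<le> Bg k D R 1 a" if "a \<le> b" for a b by (rule Bg_mono[OF that])
    show "Bg k D R 2 b \<le> Bg k D R 2 a" if "a \<le> b" for a b by (rule Bg_mono[OF that])
  qed
  have ch: "(fst \<tau>1 \<le> fst \<tau>2 \<and> fst \<tau>2 \<le> fst \<tau>3 \<and> snd \<tau>3 \<le> snd \<tau>2 \<and> snd \<tau>2 \<le> snd \<tau>1)
       \<or> (fst \<tau>3 \<le> fst \<tau>2 \<and> fst \<tau>2 \<le> fst \<tau>1 \<and> snd \<tau>1 \<le> snd \<tau>2 \<and> snd \<tau>2 \<le> snd \<tau>3)"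
    by (rule three_point) (use assms in \<open>auto simp: postproc_eq\<close>)
  define a where "a = da D i"
  have a12: "a = 1 \<or> a = 2" using labels assms(10) by (auto simp: a_def)
  have cl: "clf D R t (dx D i) (da D i) = nthr D R a (if a = 1 then fst t else snd t) (R (dx D i) a)" for t
    by (simp add: clf_def a_def)
  show ?thesis
    unfolding cl using ch a12 by (auto intro: nthr_mono)
qed

end
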